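(* Let $\ell\geq 2$ be an integer. Then $\mathbb{O}_2(\ell,\mathbb{Q})\neq\emptyset$ if and only if the factorization of $\ell$ into powers of distinct primes is of the form $\ell=p_1^{k_1}\cdots p_r^{k_r}$ with $p_i\equiv 1\bmod 4$ for every $i\leq r$. In that case, $\#\mathbb{O}_2(\ell,\mathbb{Q})=2^{r+3}$, where $r$ is the number of distinct prime factors of $\ell$.
   Context: The level of a rational matrix $Q$ is the least integer $\ell\geq 1$ with $\ell Q$ having integer entries. $\mathbb{O}_n(\ell,\mathbb{Q})$ denotes the set of all rational orthogonal $n\times n$ matrices with level $\ell$. *)

theory Defs
  imports "HOL-Analysis.Analysis" "HOL-Computational_Algebra.Primes"
begin

definition rat_orthogonal :: "rat^'n^'n \<Rightarrow> bool" where
  "rat_orthogonal Q \<longleftrightarrow> transpose Q ** Q = mat 1 \<and> Q ** transpose Q = mat 1"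

definition int_matrix :: "rat^'n^'m \<Rightarrow> bool" where
  "int_matrix A \<longleftrightarrow> (\<forall>i j. A $ i $ j \<in> \<int>)"

definition level :: "rat^'n^'m \<Rightarrow> nat" where
  "level Q = (LEAST l::nat. l \<ge> 1 \<and> int_matrix (\<chi> i j. (of_nat l :: rat) * Q $ i $ j))"

definition orth_level :: "nat \<Rightarrow> (rat^'n^'n) set" where
  "orth_level l = {Q. rat_orthogonal Q \<and> level Q = l}"

end

theory Submission
  imports Defs "HOL-Number_Theory.Number_Theory"
begin


definition rootsm1 :: "int \<Rightarrow> int set" where
  "rootsm1 m = {t. 0 \<le> t \<and> t < m \<and> m dvd t^2 + 1}"

lemma finite_rootsm1: "finite (rootsm1 m)"
  unfolding rootsm1_def by (rule finite_subset[of _ "{0..m}"]) auto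

lemma rootsm1_mod:
  assumes "m dvd t^2 + 1" "m > 0"
  shows "t mod m \<in> rootsm1 m"
proof -
  have "[(t mod m)^2 + 1 = t^2 + 1] (mod m)"
    by (intro cong_add cong_pow) (auto simp: cong_def)
  then show ?thesis using assms cong_dvd_iff unfolding rootsm1_def by auto
qed

lemma rootsm1_crt:
  fixes a b :: int
  assumes "coprime a b" "a > 0" "b > 0"
  shows "card (rootsm1 (a*b)) = card (rootsm1 a) * card (rootsm1 b)"
proof -
  let ?f = "\<lambda>t. (t mod a, t mod b)"
  have "bij_betw ?f (rootsm1 (a*b)) (rootsm1 a \<times> rootsm1 b)"
  proof (rule bij_betwI')
    fix x y assume "x \<in> rootsm1 (a*b)" "y \<in> rootsm1 (a*b)"
    then have x: "0 \<le> x" "x < a*b" and y: "0 \<le> y" "y < a*b" unfolding rootsm1_def by auto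
    show "(?f x = ?f y) = (x = y)"
    proof
      assume "?f x = ?f y"
      then have "[x = y] (mod a*b)"
        using coprime_cong_mult[of x y a b] assms(1) by (auto simp: cong_def)
      then show "x = y" using cong_less_imp_eq_int x y by blast
    qed simp
  next
    fix x assume "x \<in> rootsm1 (a*b)"
    then have "a dvd x^2+1" "b dvd x^2+1" unfolding rootsm1_def
      by (auto intro: dvd_mult_left dvd_mult_right)
    then show "?f x \<in> rootsm1 a \<times> rootsm1 b"
      using rootsm1_mod assms by auto
  next
    fix p assume p: "p \<in> rootsm1 a \<times> rootsm1 b"
    obtain u v where puv: "p = (u, v)" by (cases p)
    have uv: "(u, v) \<in> rootsm1 a \<times> rootsm1 b" using p puv by simp
    obtain x where x: "[x = u] (mod a)" "[x = v] (mod b)"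
      using binary_chinese_remainder_int[OF assms(1)] by blast
    have "a dvd x^2 + 1"
    proof -
      have "[x^2+1 = u^2+1] (mod a)" using x by (intro cong_add cong_pow) auto
      then show ?thesis using uv cong_dvd_iff unfolding rootsm1_def by auto
    qed
    moreover have "b dvd x^2 + 1"
    proof -
      have "[x^2+1 = v^2+1] (mod b)" using x by (intro cong_add cong_pow) auto
      then show ?thesis using uv cong_dvd_iff unfolding rootsm1_def by auto
    qed
    ultimately have "a*b dvd x^2+1" using assms(1) by (simp add: divides_mult)
    then have "x mod (a*b) \<in> rootsm1 (a*b)" using rootsm1_mod assms by auto
    moreover have "?f (x mod (a*b)) = (u, v)"
    proof -
      have "x mod (a*b) mod a = x mod a" by (simp add: mod_mod_cancel)
      also have "\<dots> = u" using x uv unfolding rootsm1_def cong_def by auto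
      moreover have "x mod (a*b) mod b = x mod b" by (simp add: mod_mod_cancel)
      moreover have "x mod b = v" using x uv unfolding rootsm1_def cong_def by auto
      ultimately show ?thesis by simp
    qed
    ultimately show "\<exists>t \<in> rootsm1 (a*b). p = ?f t" using puv by metis
  qed
  then show ?thesis using bij_betw_same_card card_cartesian_product by metis
qed

lemma minus1_legendre:
  fixes p :: nat
  assumes "prime p" "p > 2"
  shows "[Legendre (-1) (int p) = (-1) ^ ((p - 1) div 2)] (mod int p)"
  using euler_criterion[OF assms] by simp

lemma sqrt_minus1_exists:
  fixes p :: nat
  assumes "prime p" "p mod 4 = 1"
  shows "\<exists>y::int. int p dvd y^2 + 1"
proof -
  have "p \<noteq> 2" using assms(2) by auto
  then have p2: "p > 2" using prime_ge_2_nat[OF assms(1)] by simp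
  have "even ((p - 1) div 2)" using assms(2) by presburger
  then have "((-1::int)) ^ ((p - 1) div 2) = 1" by simp
  then have L: "[Legendre (-1) (int p) = 1] (mod int p)" using minus1_legendre[OF assms(1) p2] by simp
  have n0: "\<not> [(-1::int) = 0] (mod int p)"
  proof
    assume "[(-1::int) = 0] (mod int p)"
    then have "int p dvd 1" by (simp add: cong_iff_dvd_diff)
    then show False using p2 by simp
  qed
  show ?thesis
  proof (cases "QuadRes (int p) (-1)")
    case True
    then obtain y where "[y^2 = -1] (mod int p)" unfolding QuadRes_def by blast
    then have "int p dvd y^2 - (-1)" by (simp add: cong_iff_dvd_diff)
    then show ?thesis by auto
  next
    case False
    then have "[-1 = 1] (mod int p)" using L n0 unfolding Legendre_def by simp
    then have "int p dvd 2" by (simp add: cong_iff_dvd_diff)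
    then have "p dvd 2" by presburger
    then show ?thesis using p2 by (simp add: nat_dvd_not_less)
  qed
qed

lemma sqrt_minus1_not_exists:
  fixes p :: nat and y :: int
  assumes "prime p" "p mod 4 = 3"
  shows "\<not> int p dvd y^2 + 1"
proof
  assume d: "int p dvd y^2 + 1"
  have p2: "p > 2" using assms prime_ge_2_nat[OF assms(1)] by presburger
  have "odd ((p - 1) div 2)" using assms(2) by presburger
  then have "((-1::int)) ^ ((p - 1) div 2) = -1" by simp
  then have L: "[Legendre (-1) (int p) = -1] (mod int p)" using minus1_legendre[OF assms(1) p2] by simp
  have n0: "\<not> [(-1::int) = 0] (mod int p)"
  proof
    assume "[(-1::int) = 0] (mod int p)"
    then have "int p dvd 1" by (simp add: cong_iff_dvd_diff)
    then show False using p2 by simp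
  qed
  have "[y^2 = -1] (mod int p)" using d by (simp add: cong_iff_dvd_diff)
  then have "QuadRes (int p) (-1)" unfolding QuadRes_def by blast
  then have "[1 = -1] (mod int p)" using L n0 unfolding Legendre_def by simp
  then have "int p dvd 2" by (simp add: cong_iff_dvd_diff)
  then have "p dvd 2" by presburger
  then show False using p2 by (simp add: nat_dvd_not_less)
qed

lemma not_4_dvd: "\<not> (4::int) dvd y^2 + 1"
proof -
  have m4: "y^2 mod 4 = 0 \<or> y^2 mod 4 = 1"
  proof (cases "even y")
    case True then obtain k where "y = 2*k" by blast
    then have "y^2 = 4*(k*k)" by (simp add: power2_eq_square algebra_simps)
    then have "\<exists>m. y^2 = 4*m" by blast
    then show ?thesis by presburger
  next
    case False then obtain k where "y = 2*k+1" using oddE by blast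
    then have "y^2 = 4*(k*k+k) + 1" by (simp add: power2_eq_square algebra_simps)
    then have "\<exists>m. y^2 = 4*m + 1" by blast
    then show ?thesis by presburger
  qed
  have H: "\<And>z::int. z mod 4 = 0 \<or> z mod 4 = 1 \<Longrightarrow> \<not> 4 dvd z + 1" by presburger
  from m4 show ?thesis by (rule H)
qed

lemma hensel_step:
  fixes p :: int and t :: int
  assumes "prime p" "odd p" "p^e dvd t^2 + 1" "e \<ge> 1"
  shows "\<exists>t'. p^(e+1) dvd t'^2 + 1"
proof -
  obtain q where q: "t^2 + 1 = p^e * q" using assms(3) by blast
  have "\<not> p dvd t"
  proof
    assume "p dvd t"
    then have "p dvd t^2" by (simp add: power2_eq_square)
    moreover have "p dvd t^2 + 1" using assms(3,4) dvd_trans[OF dvd_power[of e p] assms(3)] by simp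
    ultimately have "p dvd 1" by (simp add: dvd_add_right_iff)
    then show False using assms(1) not_prime_unit by blast
  qed
  moreover have "\<not> p dvd 2"
  proof
    assume "p dvd 2"
    then have "p \<le> 2" by (simp add: zdvd_imp_le)
    moreover have "p > 1" using prime_gt_1_int assms(1) by blast
    ultimately have "p = 2" by simp
    then show False using assms(2) by simp
  qed
  ultimately have "\<not> p dvd 2*t" using assms(1) prime_dvd_mult_iff by blast
  then have "coprime p (2*t)" using assms(1) prime_imp_coprime by blast
  then have "coprime (2*t) p" by (simp add: coprime_commute)
  then obtain w where w: "[2*t*w = 1] (mod p)" using cong_solve_coprime_int by blast
  define c where "c = - q * w"
  have "p dvd q + 2*t*c"
  proof -
    have "q + 2*t*c = q * (1 - 2*t*w)" unfolding c_def by (simp add: algebra_simps)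
    moreover have "p dvd 1 - 2*t*w" using w by (simp add: cong_iff_dvd_diff dvd_diff_commute)
    ultimately show ?thesis by simp
  qed
  then obtain r where r: "q + 2*t*c = p * r" by blast
  have "(t + c*p^e)^2 + 1 = p^e * (q + 2*t*c) + c^2 * p^(2*e)"
  proof -
    have "(t + c*p^e)^2 + 1 = (t^2 + 1) + 2*t*c*p^e + c^2 * (p^e)^2"
      by (simp add: power2_eq_square algebra_simps)
    moreover have "(p^e)^2 = p^(2*e)" by (simp add: power_mult[symmetric] mult.commute)
    ultimately show ?thesis using q by (simp add: algebra_simps)
  qed
  also have "\<dots> = p^(e+1) * (r + c^2 * p^(e - 1))"
  proof -
    have "2*e = (e+1) + (e-1)" using assms(4) by simp
    then have "p^(2*e) = p^(e+1) * p^(e-1)" by (metis power_add)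
    then show ?thesis using r by (simp add: algebra_simps)
  qed
  finally show ?thesis by (metis dvd_triv_left)
qed

lemma prime_power_root_exists:
  fixes p :: nat
  assumes "prime p" "p mod 4 = 1" "e \<ge> 1"
  shows "\<exists>y::int. (int p)^e dvd y^2 + 1"
  using assms(3)
proof (induction e rule: dec_induct)
  case base
  then show ?case using sqrt_minus1_exists[OF assms(1,2)] by simp
next
  case (step e)
  then obtain y where "(int p)^e dvd y^2 + 1" by blast
  moreover have "prime (int p)" using assms(1) by simp
  moreover have "odd (int p)" using assms(2) by presburger
  ultimately show ?case using hensel_step step(1) by (metis Suc_eq_plus1)
qed

lemma dvd_small_zero:
  fixes m x :: int
  assumes "m > 0" "m dvd x" "-m < x" "x < m"
  shows "x = 0"
proof -
  obtain k where k: "x = m * k" using assms(2) by blast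
  have "k < 1"
  proof (rule ccontr)
    assume "\<not> k < 1"
    then have "m * 1 \<le> m * k" using assms(1) by (intro mult_left_mono) auto
    then show False using k assms(4) by simp
  qed
  moreover have "k > -1"
  proof (rule ccontr)
    assume "\<not> k > -1"
    then have "m * k \<le> m * (-1)" using assms(1) by (intro mult_left_mono) auto
    then show False using k assms(3) by simp
  qed
  ultimately show ?thesis using k by simp
qed

lemma prime_power_roots_card:
  fixes p :: nat
  assumes "prime p" "p mod 4 = 1" "e \<ge> 1"
  shows "card (rootsm1 ((int p)^e)) = 2"
proof -
  define m where "m = (int p)^e"
  have p1: "int p > 1" using prime_gt_1_nat[OF assms(1)] by simp
  have "(int p)^1 \<le> (int p)^e" using power_increasing[OF assms(3), of "int p"] p1 by simp
  then have "m \<ge> int p" unfolding m_def by simp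
  then have m1: "m > 1" using p1 by simp
  have oddp: "odd (int p)" using assms(2) by presburger
  then have oddm: "odd m" unfolding m_def by simp
  have pip: "prime (int p)" using assms(1) by simp
  obtain y where "m dvd y^2 + 1" using prime_power_root_exists[OF assms] unfolding m_def by blast
  then have t0: "y mod m \<in> rootsm1 m" using rootsm1_mod m1 by simp
  define t0 where "t0 = y mod m"
  have t0r: "0 \<le> t0" "t0 < m" "m dvd t0^2 + 1" using t0 unfolding t0_def rootsm1_def by auto
  have "t0 \<noteq> 0"
  proof
    assume "t0 = 0"
    then have "m dvd 1" using t0r by simp
    then show False using m1 by simp
  qed
  then have t0pos: "t0 > 0" using t0r by simp
  define t1 where "t1 = m - t0"
  have "t1^2 + 1 = (t0^2 + 1) + m * (m - 2*t0)" unfolding t1_def by (simp add: power2_eq_square algebra_simps)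
  then have "m dvd t1^2 + 1" using t0r by (metis dvd_add dvd_triv_left)
  then have t1: "t1 \<in> rootsm1 m" unfolding rootsm1_def t1_def using t0r t0pos by simp
  have "t0 \<noteq> t1"
  proof
    assume "t0 = t1"
    then have "m = 2 * t0" unfolding t1_def by simp
    then show False using oddm by simp
  qed
  have "rootsm1 m = {t0, t1}"
  proof
    show "{t0, t1} \<subseteq> rootsm1 m" using t0 t1 unfolding t0_def by simp
  next
    show "rootsm1 m \<subseteq> {t0, t1}"
    proof
      fix s assume s: "s \<in> rootsm1 m"
      then have sr: "0 \<le> s" "s < m" "m dvd s^2 + 1" unfolding rootsm1_def by auto
      have "(s - t0) * (s + t0) = (s^2 + 1) - (t0^2 + 1)" by (simp add: power2_eq_square algebra_simps)
      then have md: "m dvd (s - t0) * (s + t0)" using sr(3) t0r(3) by (metis dvd_diff)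
      have "int p dvd m" unfolding m_def using dvd_power[of e "int p"] assms(3) by simp
      then have pd: "int p dvd s^2 + 1" using sr dvd_trans by blast
      have "\<not> (int p dvd s - t0 \<and> int p dvd s + t0)"
      proof
        assume "int p dvd s - t0 \<and> int p dvd s + t0"
        then have "int p dvd (s - t0) + (s + t0)" by (metis dvd_add)
        moreover have "(s - t0) + (s + t0) = 2 * s" by simp
        ultimately have "int p dvd 2 * s" by metis
        moreover have "\<not> int p dvd 2"
        proof
          assume "int p dvd 2"
          then have "int p \<le> 2" using zdvd_imp_le[of "int p" 2] by linarith
          then have "int p = 2" using p1 by simp
          then show False using oddp by simp
        qed
        ultimately have "int p dvd s" using pip prime_dvd_mult_iff by blast
        then have "int p dvd s^2" by (simp add: power2_eq_square)
        then have "int p dvd 1" using pd by (simp add: dvd_add_right_iff)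
        then show False using p1 by simp
      qed
      then have "\<not> int p dvd s - t0 \<or> \<not> int p dvd s + t0" by blast
      then show "s \<in> {t0, t1}"
      proof (elim disjE)
        assume "\<not> int p dvd s - t0"
        then have "coprime (int p) (s - t0)" using pip prime_imp_coprime by blast
        then have "coprime m (s - t0)" unfolding m_def by simp
        then have "m dvd s + t0" using md coprime_dvd_mult_right_iff by blast
        then have "m dvd (s + t0) - m" by simp
        then have "(s + t0) - m = 0" using dvd_small_zero[of m "(s + t0) - m"] m1 sr t0r t0pos by simp
        then show ?thesis unfolding t1_def by simp
      next
        assume "\<not> int p dvd s + t0"
        then have "coprime (int p) (s + t0)" using pip prime_imp_coprime by blast
        then have "coprime m (s + t0)" unfolding m_def by simp
        then have "m dvd s - t0" using md coprime_dvd_mult_left_iff by blast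
        then have "s - t0 = 0" using dvd_small_zero[of m "s - t0"] m1 sr t0r by simp
        then show ?thesis by simp
      qed
    qed
  qed
  then show ?thesis unfolding m_def using \<open>t0 \<noteq> t1\<close> by simp
qed

lemma rootsm1_one: "rootsm1 1 = {0}"
  unfolding rootsm1_def by auto

lemma pf_aux:
  fixes p q m k :: nat
  assumes "prime p" "k \<ge> 1"
  shows "prime q \<and> q dvd p^k * m \<longleftrightarrow> prime q \<and> (q = p \<or> q dvd m)"
proof
  assume a: "prime q \<and> q dvd p^k * m"
  then have "q dvd p^k \<or> q dvd m" using prime_dvd_mult_iff by blast
  moreover have "q dvd p^k \<Longrightarrow> q = p"
  proof -
    assume "q dvd p^k"
    then have "q dvd p" using a prime_dvd_power by blast
    then show "q = p" using a assms(1) primes_dvd_imp_eq by blast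
  qed
  ultimately show "prime q \<and> (q = p \<or> q dvd m)" using a by blast
next
  assume a: "prime q \<and> (q = p \<or> q dvd m)"
  have "p dvd p^k" using assms(2) dvd_power[of k p] by simp
  then show "prime q \<and> q dvd p^k * m" using a by auto
qed

lemma roots_count:
  fixes l :: nat
  assumes "l \<ge> 1" "\<forall>p \<in> prime_factors l. p mod 4 = 1"
  shows "card (rootsm1 ((int l)^2)) = 2 ^ card (prime_factors l)"
  using assms
proof (induction l rule: less_induct)
  case (less l)
  show ?case
  proof (cases "l = 1")
    case True
    then show ?thesis using rootsm1_one by simp
  next
    case False
    then obtain p where p: "prime p" "p dvd l" using prime_factor_nat by blast
    define k where "k = multiplicity p l"
    define m where "m = l div p^k"
    have lpm: "l = p^k * m" unfolding m_def k_def using multiplicity_dvd[of p l] by simp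
    have npm: "\<not> p dvd m" unfolding m_def k_def
      by (rule multiplicity_decompose) (use less.prems(1) p(1) not_prime_unit in auto)
    have k1: "k \<ge> 1" unfolding k_def using p multiplicity_gt_zero_iff[of l p] less.prems(1) prime_gt_1_nat[of p] by auto
    have m1: "m \<ge> 1" using lpm less.prems(1) by (cases "m = 0") auto
    have p2: "p \<ge> 2" using prime_ge_2_nat p(1) by simp
    have "p^k \<ge> p^1" using power_increasing[OF k1, of p] p2 by simp
    then have "p^k \<ge> 2" using p2 by simp
    then have "2*m \<le> p^k*m" by (rule mult_le_mono1)
    then have "m < l" using lpm m1 by linarith
    have pfq: "q \<in> prime_factors l \<longleftrightarrow> q \<in> insert p (prime_factors m)" for q
    proof -
      have "q \<in> prime_factors l \<longleftrightarrow> prime q \<and> q dvd p^k * m" using lpm less.prems(1) p2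
        by (auto simp: in_prime_factors_iff)
      also have "\<dots> \<longleftrightarrow> prime q \<and> (q = p \<or> q dvd m)"
        using pf_aux[OF p(1) k1] by blast
      also have "\<dots> \<longleftrightarrow> q \<in> insert p (prime_factors m)" using m1 p(1) by (auto simp: in_prime_factors_iff)
      finally show ?thesis .
    qed
    have pf: "prime_factors l = insert p (prime_factors m)" using pfq by blast
    have pnm: "p \<notin> prime_factors m" using npm by (simp add: in_prime_factors_iff)
    have IH: "card (rootsm1 ((int m)^2)) = 2 ^ card (prime_factors m)"
      using less.IH[OF \<open>m < l\<close> m1] less.prems(2) pf by simp
    have p4: "p mod 4 = 1" using less.prems(2) pf by simp
    have "coprime (int p) (int m)" using prime_imp_coprime[OF p(1) npm] by simp
    then have cop: "coprime ((int p)^(2*k)) ((int m)^2)" by simp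
    have eq: "(int l)^2 = (int p)^(2*k) * (int m)^2" using lpm
      by (simp add: power_mult_distrib power_mult[symmetric] mult.commute)
    have "card (rootsm1 ((int l)^2)) = card (rootsm1 ((int p)^(2*k))) * card (rootsm1 ((int m)^2))"
      unfolding eq using rootsm1_crt[OF cop] p2 m1 by simp
    also have "\<dots> = 2 * 2 ^ card (prime_factors m)"
      using prime_power_roots_card[OF p(1) p4, of "2*k"] k1 IH by simp
    also have "\<dots> = 2 ^ card (prime_factors l)" using pf pnm by simp
    finally show ?thesis .
  qed
qed

lemma roots_empty:
  fixes l :: nat
  assumes "l \<ge> 1" "p \<in> prime_factors l" "p mod 4 \<noteq> 1"
  shows "rootsm1 ((int l)^2) = {}"
proof (rule ccontr)
  assume "rootsm1 ((int l)^2) \<noteq> {}"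
  then obtain t where t: "(int l)^2 dvd t^2 + 1" unfolding rootsm1_def by auto
  have p: "prime p" "p dvd l" using assms(2) by (auto simp: in_prime_factors_iff)
  show False
  proof (cases "p = 2")
    case True
    then obtain j where "l = 2 * j" using p(2) by blast
    then have "(int l)^2 = 4 * (int j)^2" by (simp add: power2_eq_square)
    then have "(4::int) dvd (int l)^2" by simp
    then have "(4::int) dvd t^2 + 1" using t dvd_trans by blast
    then show False using not_4_dvd by blast
  next
    case False
    then have "p > 2" using prime_ge_2_nat[OF p(1)] by simp
    then have "odd p" using p(1) prime_odd_nat by blast
    then have "p mod 4 = 3" using assms(3) by presburger
    have "int p dvd int l" using p(2) by simp
    then have "int p dvd (int l)^2" by (simp add: power2_eq_square)
    then have "int p dvd t^2 + 1" using t dvd_trans by blast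
    then show False using sqrt_minus1_not_exists[OF p(1) \<open>p mod 4 = 3\<close>] by blast
  qed
qed



definition reps :: "int \<Rightarrow> (int \<times> int) set" where
  "reps n = {(x, y). x^2 + y^2 = n \<and> coprime x y}"

definition fib :: "int \<Rightarrow> int \<Rightarrow> (int \<times> int) set" where
  "fib n t = {(x, y). (x, y) \<in> reps n \<and> n dvd x - t*y}"

lemma abs_le_sq: "\<bar>x::int\<bar> \<le> x^2"
proof (cases "x = 0")
  case False
  then have "1 \<le> \<bar>x\<bar>" by simp
  then have "\<bar>x\<bar> * 1 \<le> \<bar>x\<bar> * \<bar>x\<bar>" by (intro mult_left_mono) auto
  then show ?thesis by (simp add: power2_eq_square abs_mult[symmetric])
qed simp

lemma finite_reps: "finite (reps n)"
proof (rule finite_subset[of _ "{-\<bar>n\<bar>..\<bar>n\<bar>} \<times> {-\<bar>n\<bar>..\<bar>n\<bar>}"])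
  show "reps n \<subseteq> {-\<bar>n\<bar>..\<bar>n\<bar>} \<times> {-\<bar>n\<bar>..\<bar>n\<bar>}"
  proof
    fix p assume "p \<in> reps n"
    then obtain x y where p: "p = (x, y)" "x^2 + y^2 = n" unfolding reps_def by auto
    have "\<bar>x\<bar> \<le> \<bar>n\<bar>" using abs_le_sq[of x] p(2) by (smt (verit) zero_le_power2)
    moreover have "\<bar>y\<bar> \<le> \<bar>n\<bar>" using abs_le_sq[of y] p(2) by (smt (verit) zero_le_power2)
    ultimately show "p \<in> {-\<bar>n\<bar>..\<bar>n\<bar>} \<times> {-\<bar>n\<bar>..\<bar>n\<bar>}" using p(1) by auto
  qed
qed simp

lemma rep_coprime_n:
  assumes "(x, y) \<in> reps n"
  shows "coprime y n"
proof (rule coprimeI)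
  fix c assume c: "c dvd y" "c dvd n"
  have n: "n = x^2 + y*y" "coprime x y" using assms unfolding reps_def by (auto simp: power2_eq_square)
  have "c dvd x^2" using c n(1) by (metis dvd_add_left_iff dvd_mult)
  moreover have "coprime (x^2) y" using n(2) by simp
  ultimately show "is_unit c" using c(1) coprime_common_divisor by blast
qed

lemma root_of_rep:
  assumes "(x, y) \<in> reps n" "n > 1"
  shows "\<exists>t \<in> rootsm1 n. n dvd x - t*y"
proof -
  have cop: "coprime y n" using rep_coprime_n[OF assms(1)] .
  have nxy: "n = x^2 + y^2" using assms(1) unfolding reps_def by auto
  obtain w where "[y*w = 1] (mod n)" using cong_solve_coprime_int[OF cop] by blast
  then obtain a where a: "y*w - 1 = n*a" by (metis cong_iff_dvd_diff dvdE)
  define t where "t = (x*w) mod n"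
  define q where "q = (x*w) div n"
  have tq: "t = x*w - n*q" unfolding t_def q_def by (metis minus_div_mult_eq_mod mult.commute)
  have yw: "y*w = 1 + n*a" using a by simp
  have "x - t*y = x - x*(y*w) + n*q*y" unfolding tq by (simp add: algebra_simps)
  also have "\<dots> = n * (y*q - x*a)" using yw by (simp add: algebra_simps)
  finally have "x - t*y = n * (y*q - x*a)" .
  then have d1: "n dvd x - t*y" by simp
  then obtain c where c: "t*y = x + n*c" by (metis dvd_def diff_diff_eq2 diff_eq_eq add.commute mult_minus_right add_uminus_conv_diff minus_diff_eq)
  have "y^2 * (t^2 + 1) = (t*y)^2 + y^2" by (simp add: power2_eq_square algebra_simps)
  also have "\<dots> = n * (1 + 2*x*c + n*c^2)" using c nxy by (simp add: power2_eq_square algebra_simps)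
  finally have "n dvd (t^2 + 1) * y^2" by (simp add: mult.commute)
  moreover have "coprime n (y^2)" using cop by (simp add: coprime_commute)
  ultimately have "n dvd t^2 + 1" using coprime_dvd_mult_left_iff by blast
  moreover have "0 \<le> t" "t < n" unfolding t_def using assms(2) by auto
  ultimately show ?thesis using d1 unfolding rootsm1_def by auto
qed

lemma root_unique:
  assumes "(x, y) \<in> reps n" "t \<in> rootsm1 n" "t' \<in> rootsm1 n" "n dvd x - t*y" "n dvd x - t'*y"
  shows "t = t'"
proof -
  have "n dvd (x - t*y) - (x - t'*y)" using assms(4,5) by (rule dvd_diff)
  moreover have "(x - t*y) - (x - t'*y) = (t' - t) * y" by (simp add: algebra_simps)
  ultimately have "n dvd (t' - t) * y" by simp
  moreover have "coprime n y" using rep_coprime_n[OF assms(1)] by (simp add: coprime_commute)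
  ultimately have "n dvd t' - t" using coprime_dvd_mult_left_iff by blast
  moreover have "n > 0" using assms(2) unfolding rootsm1_def by auto
  ultimately have "t' - t = 0" using dvd_small_zero[of n "t' - t"] assms(2,3) unfolding rootsm1_def by auto
  then show ?thesis by simp
qed

lemma unit_circle_int:
  fixes c d :: int
  assumes "c^2 + d^2 = 1"
  shows "(c = 1 \<and> d = 0) \<or> (c = -1 \<and> d = 0) \<or> (c = 0 \<and> d = 1) \<or> (c = 0 \<and> d = -1)"
proof -
  have "c^2 \<le> 1" using assms by (smt (verit) zero_le_power2)
  then have "\<bar>c\<bar> \<le> 1" by (simp add: abs_square_le_1)
  then have "c = 0 \<or> c = 1 \<or> c = -1" by linarith
  then show ?thesis
  proof (elim disjE)
    assume "c = 0" then have "d^2 = 1" using assms by simp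
    then show ?thesis using \<open>c = 0\<close> power2_eq_1_iff by blast
  next
    assume "c = 1" then have "d^2 = 0" using assms by simp
    then show ?thesis using \<open>c = 1\<close> by simp
  next
    assume "c = -1" then have "d^2 = 0" using assms by simp
    then show ?thesis using \<open>c = -1\<close> by simp
  qed
qed

lemma classify:
  fixes n t x y a b :: int
  assumes "n > 0" "n dvd t^2 + 1" "x^2 + y^2 = n" "n dvd x - t*y" "a^2 + b^2 = n" "n dvd a - t*b"
  shows "(a, b) \<in> {(x, y), (-x, -y), (-y, x), (y, -x)}"
proof -
  have "a*x + b*y = (a - t*b)*x + b*t*(x - t*y) + b*y*(t^2 + 1)" by (simp add: power2_eq_square algebra_simps)
  then have "n dvd a*x + b*y" using assms(2,4,6) by (metis dvd_add dvd_mult dvd_mult2 mult.assoc)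
  then obtain c where c: "a*x + b*y = n*c" by blast
  have "b*x - a*y = b*(x - t*y) - y*(a - t*b)" by (simp add: algebra_simps)
  then have "n dvd b*x - a*y" using assms(4,6) by (metis dvd_diff dvd_mult)
  then obtain d where d: "b*x - a*y = n*d" by blast
  have "n^2 * (c^2 + d^2) = (n*c)^2 + (n*d)^2" by (simp add: power2_eq_square algebra_simps)
  also have "\<dots> = (a*x + b*y)^2 + (b*x - a*y)^2" using c d by simp
  also have "\<dots> = (a^2 + b^2) * (x^2 + y^2)" by (simp add: power2_eq_square algebra_simps)
  also have "\<dots> = n^2 * 1" using assms(3,5) by (simp add: power2_eq_square)
  finally have "n^2 * (c^2 + d^2) = n^2 * 1" .
  then have cd1: "c^2 + d^2 = 1" using assms(1) by simp
  have "n * a = (a*x + b*y)*x - (b*x - a*y)*y" unfolding assms(3)[symmetric] by (simp add: power2_eq_square algebra_simps)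
  also have "\<dots> = n * (c*x - d*y)" using c d by (simp add: algebra_simps)
  finally have ha: "a = c*x - d*y" using assms(1) by simp
  have "n * b = (a*x + b*y)*y + (b*x - a*y)*x" unfolding assms(3)[symmetric] by (simp add: power2_eq_square algebra_simps)
  also have "\<dots> = n * (c*y + d*x)" using c d by (simp add: algebra_simps)
  finally have hb: "b = c*y + d*x" using assms(1) by simp
  show ?thesis using unit_circle_int[OF cd1] ha hb by auto
qed



lemma short_vector:
  fixes l t :: int
  assumes "l \<ge> 2" "odd l" "t \<in> rootsm1 (l^2)"
  shows "\<exists>x y. x^2 + y^2 = l^2 \<and> l^2 dvd x - t*y"
proof -
  define n where "n = l^2"
  have tr: "0 \<le> t" "t < n" "n dvd t^2 + 1" using assms(3) unfolding rootsm1_def n_def by auto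
  have npos: "n > 0" unfolding n_def using assms(1) by simp
  define A where "A = {0..l} \<times> {0..l}"
  define g where "g = (\<lambda>(u, v). (u - t* v) mod n)"
  have "g ` A \<subseteq> {0..<n}" unfolding g_def using npos by auto
  then have "card (g ` A) \<le> card {0..<n}" by (intro card_mono) auto
  also have "\<dots> = nat n" by simp
  also have "\<dots> < nat ((l+1)^2)"
  proof -
    have "n < (l+1)^2" unfolding n_def using assms(1) by (simp add: power2_eq_square algebra_simps)
    then show ?thesis using npos assms(1) by simp
  qed
  also have "\<dots> = card A" unfolding A_def using assms(1) by (simp add: card_cartesian_product power2_eq_square nat_mult_distrib)
  finally have "\<not> inj_on g A" using pigeonhole by blast
  then obtain p1 p2 where pp: "p1 \<in> A" "p2 \<in> A" "p1 \<noteq> p2" "g p1 = g p2" unfolding inj_on_def by blast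
  obtain u1 v1 where p1: "p1 = (u1, v1)" by (cases p1)
  obtain u2 v2 where p2: "p2 = (u2, v2)" by (cases p2)
  define x where "x = u1 - u2"
  define y where "y = v1 - v2"
  have xyb: "\<bar>x\<bar> \<le> l" "\<bar>y\<bar> \<le> l" using pp(1,2) unfolding p1 p2 A_def x_def y_def by auto
  have xy0: "x \<noteq> 0 \<or> y \<noteq> 0" using pp(3) unfolding p1 p2 x_def y_def by auto
  have "n dvd (u1 - t* v1) - (u2 - t* v2)" using pp(4) unfolding p1 p2 g_def by (simp add: mod_eq_dvd_iff)
  moreover have "(u1 - t* v1) - (u2 - t* v2) = x - t*y" unfolding x_def y_def by (simp add: algebra_simps)
  ultimately have dxy: "n dvd x - t*y" by simp
  have "x^2 + y^2 = (x - t*y)*(x + t*y) + y^2*(t^2 + 1)" by (simp add: power2_eq_square algebra_simps)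
  then have "n dvd x^2 + y^2" using dxy tr(3) by (metis dvd_add dvd_mult dvd_mult2)
  then obtain k where k: "x^2 + y^2 = n*k" by blast
  have sx: "x^2 \<le> l^2" using xyb(1) abs_le_square_iff[of x l] assms(1) by simp
  have sy: "y^2 \<le> l^2" using xyb(2) abs_le_square_iff[of y l] assms(1) by simp
  have pos: "x^2 + y^2 > 0" using xy0 by (simp add: sum_power2_gt_zero_iff)
  have "k > 0" using pos k npos by (simp add: zero_less_mult_iff)
  moreover have "k < 3"
  proof (rule ccontr)
    assume "\<not> k < 3"
    then have "n * 3 \<le> n * k" using npos by (intro mult_left_mono) auto
    then show False using k sx sy npos unfolding n_def by linarith
  qed
  moreover have "k \<noteq> 2"
  proof
    assume "k = 2"
    then have s2: "x^2 + y^2 = 2 * l^2" using k unfolding n_def by simp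
    have "x^2 = l^2" using s2 sx sy by linarith
    moreover have "y^2 = l^2" using s2 sx sy by linarith
    ultimately have "x^2 = l^2" "y^2 = l^2" by blast+
    then have "x = l \<or> x = -l" "y = l \<or> y = -l" using power2_eq_iff by blast+
    then obtain e1 e2 where e: "x = e1 * l" "y = e2 * l" "e1^2 = 1" "e2^2 = 1"
      by (metis mult_1 mult_minus_left power2_minus power_one)
    have "x - t*y = l * (e1 - t*e2)" using e by (simp add: algebra_simps)
    then have "l * l dvd l * (e1 - t*e2)" using dxy unfolding n_def by (simp add: power2_eq_square)
    then have "l dvd e1 - t*e2" using assms(1) by simp
    then have "l dvd (e1 - t*e2) * (e1 + t*e2)" by simp
    moreover have "(e1 - t*e2) * (e1 + t*e2) = 1 - t^2" using e(3,4)
      by (simp add: power2_eq_square algebra_simps)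
    ultimately have "l dvd 1 - t^2" by simp
    moreover have "l dvd t^2 + 1" using tr(3) unfolding n_def by (metis dvd_mult_left power2_eq_square)
    ultimately have "l dvd (1 - t^2) + (t^2 + 1)" by (rule dvd_add)
    then have "l dvd 2" by simp
    then have "l \<le> 2" using zdvd_imp_le[of l 2] by linarith
    then show False using assms(1,2) by simp
  qed
  ultimately have "k = 1" by linarith
  then show ?thesis using k dxy unfolding n_def by auto
qed

lemma fib_card:
  fixes l t :: int
  assumes "l \<ge> 2" "odd l" "t \<in> rootsm1 (l^2)"
  shows "card (fib (l^2) t) = 4"
proof -
  define n where "n = l^2"
  have tr: "0 \<le> t" "t < n" "n dvd t^2 + 1" using assms(3) unfolding rootsm1_def n_def by auto
  have npos: "n > 0" unfolding n_def using assms(1) by simp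
  obtain x y where xy: "x^2 + y^2 = n" "n dvd x - t*y" using short_vector[OF assms] unfolding n_def by blast
  have "t*x + y = t*(x - t*y) + y*(t^2 + 1)" by (simp add: power2_eq_square algebra_simps)
  then have "n dvd t*x + y" using xy(2) tr(3) by (metis dvd_add dvd_mult)
  then obtain c where c: "t*x + y = n*c" by blast
  obtain d where d: "x - t*y = n*d" using xy(2) by blast
  have "n * 1 = (t*x + y)*y + (x - t*y)*x" unfolding xy(1)[symmetric] by (simp add: power2_eq_square algebra_simps)
  also have "\<dots> = n * (c*y + d*x)" using c d by (simp add: algebra_simps)
  finally have "c*y + d*x = 1" using npos by simp
  have cop: "coprime x y"
  proof (rule coprimeI)
    fix e assume "e dvd x" "e dvd y"
    then have "e dvd c*y + d*x" by simp
    then show "is_unit e" using \<open>c*y + d*x = 1\<close> by simp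
  qed
  have xy0: "(x, y) \<noteq> (0, 0)" using xy(1) npos by auto
  have d1: "n dvd t*(x - t*y) + y*(t^2 + 1)" using xy(2) tr(3) by (metis dvd_add dvd_mult)
  have mem: "(a, b) \<in> fib n t" if ab: "(a, b) \<in> {(x, y), (-x, -y), (-y, x), (y, -x)}" for a b
  proof -
    from ab consider "a = x \<and> b = y" | "a = -x \<and> b = -y" | "a = -y \<and> b = x" | "a = y \<and> b = -x" by auto
    then have "n dvd a - t*b \<and> a^2 + b^2 = n \<and> coprime a b"
    proof cases
      case 1 then show ?thesis using xy cop by simp
    next
      case 2
      then have "a - t*b = -(x - t*y)" by simp
      then show ?thesis using xy cop 2 by (simp only: dvd_minus_iff) simp
    next
      case 3
      then have "a - t*b = -(t*(x - t*y) + y*(t^2 + 1))" by (simp add: power2_eq_square algebra_simps)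
      then have "n dvd a - t*b" using d1 by (simp only: dvd_minus_iff)
      then show ?thesis using xy cop 3 by (simp add: coprime_commute add.commute)
    next
      case 4
      then have "a - t*b = t*(x - t*y) + y*(t^2 + 1)" by (simp add: power2_eq_square algebra_simps)
      then have "n dvd a - t*b" using d1 by simp
      then show ?thesis using xy cop 4 by (simp add: coprime_commute add.commute)
    qed
    then show ?thesis unfolding fib_def reps_def by simp
  qed
  have "fib n t = {(x, y), (-x, -y), (-y, x), (y, -x)}"
  proof
    show "fib n t \<subseteq> {(x, y), (-x, -y), (-y, x), (y, -x)}"
    proof
      fix p assume "p \<in> fib n t"
      then obtain a b where p: "p = (a, b)" "a^2 + b^2 = n" "n dvd a - t*b" unfolding fib_def reps_def by auto
      show "p \<in> {(x, y), (-x, -y), (-y, x), (y, -x)}"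
        using classify[OF npos tr(3) xy p(2,3)] p(1) by simp
    qed
  next
    show "{(x, y), (-x, -y), (-y, x), (y, -x)} \<subseteq> fib n t" using mem by blast
  qed
  moreover have "card {(x, y), (-x, -y), (-y, x), (y, -x)} = 4" using xy0 by auto
  ultimately show ?thesis unfolding n_def by simp
qed

lemma reps_card:
  fixes l :: int
  assumes "l \<ge> 2" "odd l"
  shows "card (reps (l^2)) = 4 * card (rootsm1 (l^2))"
proof -
  define n where "n = l^2"
  have n1: "n > 1" unfolding n_def using assms(1)
    by (metis less_le_trans one_less_numeral_iff power2_eq_square semiring_norm(76) mult_le_cancel_left1 le_less_trans self_le_power zero_less_numeral numeral_le_iff less_imp_le order.strict_trans2 one_le_numeral)
  have "reps n = (\<Union>t \<in> rootsm1 n. fib n t)"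
  proof
    show "reps n \<subseteq> (\<Union>t \<in> rootsm1 n. fib n t)"
    proof
      fix p assume p: "p \<in> reps n"
      obtain x y where pxy: "p = (x, y)" by (cases p)
      then obtain t where "t \<in> rootsm1 n" "n dvd x - t*y" using root_of_rep[of x y n] p n1 by auto
      then show "p \<in> (\<Union>t \<in> rootsm1 n. fib n t)" using p pxy unfolding fib_def by auto
    qed
  qed (auto simp: fib_def)
  then have "card (reps n) = (\<Sum>t \<in> rootsm1 n. card (fib n t))"
  proof (simp, intro card_UN_disjoint)
    show "finite (rootsm1 n)" by (rule finite_rootsm1)
    show "\<forall>t\<in>rootsm1 n. finite (fib n t)"
      using finite_reps[of n] by (auto simp: fib_def intro: finite_subset[of _ "reps n"])
    show "\<forall>t\<in>rootsm1 n. \<forall>t'\<in>rootsm1 n. t \<noteq> t' \<longrightarrow> fib n t \<inter> fib n t' = {}"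
      using root_unique unfolding fib_def by blast
  qed
  also have "\<dots> = (\<Sum>t \<in> rootsm1 n. 4)" using fib_card[OF assms] unfolding n_def by simp
  finally show ?thesis unfolding n_def by simp
qed

lemma reps_empty:
  assumes "rootsm1 n = {}" "n > 1"
  shows "reps n = {}"
  using root_of_rep assms by fast



definition Mt :: "rat \<Rightarrow> rat \<Rightarrow> rat \<Rightarrow> rat^2^2" where
  "Mt a b s = (\<chi> i j. if i = 1 then (if j = 1 then a else -s*b) else (if j = 1 then b else s*a))"

lemma Mt_entries [simp]:
  "Mt a b s $ 1 $ 1 = a" "Mt a b s $ 1 $ 2 = -s*b" "Mt a b s $ 2 $ 1 = b" "Mt a b s $ 2 $ 2 = s*a"
  unfolding Mt_def by simp_all

lemma Mt_orth:
  assumes "a^2 + b^2 = 1" "s^2 = 1"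
  shows "rat_orthogonal (Mt a b s)"
proof -
  have ss: "s * s = 1" "a * a + b * b = 1" using assms by (simp_all add: power2_eq_square)
  show ?thesis
    unfolding rat_orthogonal_def
    by (simp add: vec_eq_iff forall_2 matrix_matrix_mult_def transpose_def mat_def sum_2 algebra_simps ss
        flip: distrib_left distrib_right)
qed

lemma Mt_int:
  assumes "s = 1 \<or> s = -1"
  shows "int_matrix (\<chi> i j. (of_nat k :: rat) * Mt a b s $ i $ j) \<longleftrightarrow>
         of_nat k * a \<in> \<int> \<and> of_nat k * b \<in> \<int>"
proof -
  have "of_nat k * (- s * b) \<in> \<int> \<longleftrightarrow> of_nat k * b \<in> \<int>"
    using assms by (auto simp: minus_in_Ints_iff)
  moreover have "of_nat k * (s * a) \<in> \<int> \<longleftrightarrow> of_nat k * a \<in> \<int>"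
    using assms by (auto simp: minus_in_Ints_iff)
  ultimately show ?thesis unfolding int_matrix_def by (auto simp: forall_2)
qed

lemma frac_Ints_iff:
  fixes x :: int and l k :: nat
  assumes "l > 0"
  shows "(of_nat k :: rat) * (of_int x / of_nat l) \<in> \<int> \<longleftrightarrow> int l dvd int k * x"
proof
  assume "(of_nat k :: rat) * (of_int x / of_nat l) \<in> \<int>"
  then obtain m where m: "(of_nat k :: rat) * (of_int x / of_nat l) = of_int m" by (auto elim: Ints_cases)
  then have "(of_int (int k * x) :: rat) = of_int (int l * m)" using assms by (simp add: field_simps)
  then have "int k * x = int l * m" by (simp only: of_int_eq_iff)
  then show "int l dvd int k * x" by simp
next
  assume "int l dvd int k * x"
  then obtain m where m: "int k * x = int l * m" by blast
  then have "(of_int (int k * x) :: rat) = of_int (int l * m)" by simp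
  then have "(of_nat k :: rat) * (of_int x / of_nat l) = of_int m" using assms by (simp add: field_simps)
  then show "(of_nat k :: rat) * (of_int x / of_nat l) \<in> \<int>" by simp
qed

lemma level_Mt:
  fixes x y :: int and l :: nat
  assumes "l \<ge> 1" "coprime x y" "s = 1 \<or> s = -1"
  shows "level (Mt (of_int x / of_nat l) (of_int y / of_nat l) s) = l"
proof -
  have l0: "l > 0" using assms(1) by simp
  show ?thesis
    unfolding level_def Mt_int[OF assms(3)] frac_Ints_iff[OF l0]
  proof (rule Least_equality)
    show "1 \<le> l \<and> int l dvd int l * x \<and> int l dvd int l * y" using assms(1) by simp
  next
    fix k assume k: "1 \<le> k \<and> int l dvd int k * x \<and> int l dvd int k * y"
    then have "int l dvd gcd (int k * x) (int k * y)" by simp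
    also have "gcd (int k * x) (int k * y) = int k * gcd x y" using gcd_mult_distrib_int[of "int k" x y] by simp
    also have "gcd x y = 1" using assms(2) by simp
    finally have "int l dvd int k" by simp
    then show "l \<le> k" using k by (simp add: dvd_imp_le)
  qed
qed

lemma rat_common_denom:
  fixes a b :: rat
  shows "\<exists>k::nat. 1 \<le> k \<and> of_nat k * a \<in> \<int> \<and> of_nat k * b \<in> \<int>"
proof -
  obtain na da where qa: "quotient_of a = (na, da)" by (cases "quotient_of a")
  obtain nb db where qb: "quotient_of b = (nb, db)" by (cases "quotient_of b")
  have da: "da > 0" using quotient_of_denom_pos[OF qa] .
  have db: "db > 0" using quotient_of_denom_pos[OF qb] .
  have a: "a = of_int na / of_int da" using quotient_of_div[OF qa] .
  have b: "b = of_int nb / of_int db" using quotient_of_div[OF qb] .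
  define k where "k = nat (da * db)"
  have kk: "(of_nat k :: rat) = of_int da * of_int db" unfolding k_def using da db by simp
  have "of_nat k * a = of_int (db * na)" unfolding kk a using da by (simp add: field_simps)
  moreover have "of_nat k * b = of_int (da * nb)" unfolding kk b using db by (simp add: field_simps)
  moreover have "1 \<le> k"
  proof -
    have "1 \<le> da * db" using da db by (smt (verit) mult_pos_pos)
    then have "nat 1 \<le> nat (da * db)" by (rule nat_mono)
    then show ?thesis unfolding k_def by simp
  qed
  ultimately show ?thesis by (metis Ints_of_int)
qed

lemma orth_decomp:
  fixes Q :: "rat^2^2"
  assumes "Q \<in> orth_level l" "l \<ge> 1"
  shows "\<exists>s x y. (s = 1 \<or> s = -1) \<and> (x, y) \<in> reps ((int l)^2) \<and>
           Q = Mt (of_int x / of_nat l) (of_int y / of_nat l) s"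
proof -
  have orth: "transpose Q ** Q = mat 1" and lev: "level Q = l"
    using assms(1) unfolding orth_level_def rat_orthogonal_def by auto
  define a where "a = Q$1$1"
  define b where "b = Q$2$1"
  define c where "c = Q$1$2"
  define d where "d = Q$2$2"
  have ent: "(transpose Q ** Q) $ i $ j = Q$1$i * Q$1$j + Q$2$i * Q$2$j" for i j
    by (simp add: matrix_matrix_mult_def transpose_def sum_2)
  have e1: "a*a + b*b = 1" using ent[of 1 1] orth unfolding a_def b_def by (simp add: mat_def)
  have e2: "a*c + b*d = 0" using ent[of 1 2] orth unfolding a_def b_def c_def d_def by (simp add: mat_def)
  have e3: "c*c + d*d = 1" using ent[of 2 2] orth unfolding c_def d_def by (simp add: mat_def)
  define s where "s = a*d - b*c"
  have "s^2 = (a*a + b*b)*(c*c + d*d) - (a*c + b*d)^2" unfolding s_def by (simp add: power2_eq_square algebra_simps)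
  then have "s^2 = 1" using e1 e2 e3 by simp
  then have s1: "s = 1 \<or> s = -1" using power2_eq_1_iff by blast
  have "c + s*b = a*(a*c + b*d) + c*(1 - (a*a + b*b))" unfolding s_def by (simp add: algebra_simps)
  then have hc: "c = -s*b" using e1 e2 by simp
  have "d - s*a = d*(1 - (a*a + b*b)) + b*(a*c + b*d)" unfolding s_def by (simp add: algebra_simps)
  then have hd: "d = s*a" using e1 e2 by simp
  have QM: "Q = Mt a b s"
    unfolding vec_eq_iff forall_2 using hc hd unfolding a_def b_def c_def d_def by simp
  define P where "P = (\<lambda>k::nat. 1 \<le> k \<and> of_nat k * a \<in> \<int> \<and> of_nat k * b \<in> \<int>)"
  have levP: "level Q = (LEAST k. P k)" unfolding level_def QM Mt_int[OF s1] P_def ..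
  have exP: "\<exists>k. P k" unfolding P_def by (rule rat_common_denom)
  have Pl: "P l" using LeastI_ex[OF exP] levP lev by simp
  have nP: "\<not> P k" if "k < l" for k using not_less_Least[of k P] that levP lev by simp
  obtain x where x: "of_nat l * a = of_int x" using Pl unfolding P_def by (auto elim: Ints_cases)
  obtain y where y: "of_nat l * b = of_int y" using Pl unfolding P_def by (auto elim: Ints_cases)
  have l0: "(of_nat l :: rat) \<noteq> 0" using assms(2) by simp
  have ax: "a = of_int x / of_nat l" using x l0 by (simp add: field_simps)
  have by': "b = of_int y / of_nat l" using y l0 by (simp add: field_simps)
  have "(of_int (x^2 + y^2) :: rat) = (of_nat l * a)^2 + (of_nat l * b)^2" using x y by simp
  also have "\<dots> = (of_nat l)^2 * (a*a + b*b)" by (simp add: power2_eq_square algebra_simps)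
  also have "\<dots> = of_int ((int l)^2)" using e1 by simp
  finally have sq: "x^2 + y^2 = (int l)^2" by (simp only: of_int_eq_iff)
  have cop: "coprime x y"
  proof (rule ccontr)
    assume nc: "\<not> coprime x y"
    define g where "g = gcd x y"
    have "g \<noteq> 0"
    proof
      assume "g = 0"
      then have "x = 0" "y = 0" unfolding g_def by auto
      then show False using sq assms(2) by simp
    qed
    moreover have "\<not> is_unit g" using nc unfolding g_def by (metis is_unit_gcd)
    ultimately obtain q where q: "q dvd g" "prime q" using prime_divisor_exists by blast
    have qx: "q dvd x" and qy: "q dvd y" using q(1) unfolding g_def by (auto intro: dvd_trans)
    then have "q dvd x^2 + y^2" by (simp add: power2_eq_square)
    then have "q dvd (int l)^2" using sq by simp
    then have ql: "q dvd int l" using q(2) prime_dvd_power by blast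
    obtain k' where k': "int l = q * k'" using ql by blast
    obtain x' where x': "x = q * x'" using qx by blast
    obtain y' where y': "y = q * y'" using qy by blast
    have q1: "q > 1" using q(2) prime_gt_1_int by blast
    have "0 < q * k'" using k' assms(2) by simp
    then have "k' > 0" using q1 zero_less_mult_pos[of q k'] by simp
    have "1 * k' < q * k'" using q1 \<open>k' > 0\<close> by (rule mult_strict_right_mono)
    then have "k' < int l" using k' by simp
    define k where "k = nat k'"
    have kk: "int k = k'" unfolding k_def using \<open>k' > 0\<close> by simp
    have "k < l" using \<open>k' < int l\<close> kk by linarith
    moreover have "P k"
    proof -
      have "1 \<le> k" using kk \<open>k' > 0\<close> by linarith
      moreover have "int l dvd int k * x" using kk k' x' by (simp add: algebra_simps)
      moreover have "int l dvd int k * y" using kk k' y' by (simp add: algebra_simps)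
      ultimately show ?thesis unfolding P_def ax by' using frac_Ints_iff assms(2) by simp
    qed
    ultimately show False using nP by blast
  qed
  show ?thesis using s1 sq cop QM ax by' unfolding reps_def by blast
qed

lemma orth_level_eq:
  assumes "l \<ge> 1"
  shows "(orth_level l :: (rat^2^2) set) =
    (\<lambda>(s, x, y). Mt (of_int x / of_nat l) (of_int y / of_nat l) s) ` ({1, -1} \<times> reps ((int l)^2))"
proof
  show "(orth_level l :: (rat^2^2) set) \<subseteq> (\<lambda>(s, x, y). Mt (of_int x / of_nat l) (of_int y / of_nat l) s) ` ({1, -1} \<times> reps ((int l)^2))"
  proof
    fix Q :: "rat^2^2" assume "Q \<in> orth_level l"
    then obtain s x y where "s = 1 \<or> s = -1" "(x, y) \<in> reps ((int l)^2)"
      "Q = Mt (of_int x / of_nat l) (of_int y / of_nat l) s" using orth_decomp assms by blast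
    then show "Q \<in> (\<lambda>(s, x, y). Mt (of_int x / of_nat l) (of_int y / of_nat l) s) ` ({1, -1} \<times> reps ((int l)^2))"
      by force
  qed
next
  show "(\<lambda>(s, x, y). Mt (of_int x / of_nat l) (of_int y / of_nat l) s) ` ({1, -1} \<times> reps ((int l)^2)) \<subseteq> orth_level l"
  proof
    fix Q assume "Q \<in> (\<lambda>(s, x, y). Mt (of_int x / of_nat l) (of_int y / of_nat l) s) ` ({1, -1} \<times> reps ((int l)^2))"
    then obtain s x y where s: "s = 1 \<or> s = -1" and xy: "(x, y) \<in> reps ((int l)^2)"
      and Q: "Q = Mt (of_int x / of_nat l) (of_int y / of_nat l) s" by auto
    have sq: "x^2 + y^2 = (int l)^2" and cop: "coprime x y" using xy unfolding reps_def by auto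
    have l0: "(of_nat l :: rat) \<noteq> 0" using assms by simp
    have "(of_int x / of_nat l :: rat)^2 + (of_int y / of_nat l)^2 = of_int (x^2 + y^2) / (of_nat l)^2"
      by (simp add: power_divide add_divide_distrib)
    also have "\<dots> = 1" using sq l0 by simp
    finally have "(of_int x / of_nat l :: rat)^2 + (of_int y / of_nat l)^2 = 1" .
    moreover have "s^2 = 1" using s by auto
    ultimately have "rat_orthogonal Q" unfolding Q by (rule Mt_orth)
    moreover have "level Q = l" unfolding Q by (rule level_Mt[OF assms cop s])
    ultimately show "Q \<in> orth_level l" unfolding orth_level_def by simp
  qed
qed

lemma orth_level_card:
  assumes "l \<ge> 1"
  shows "card (orth_level l :: (rat^2^2) set) = 2 * card (reps ((int l)^2))"
proof -
  let ?f = "\<lambda>(s, x, y). Mt (of_int x / of_nat l) (of_int y / of_nat l) s"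
  have l0: "(of_nat l :: rat) \<noteq> 0" using assms by simp
  have "inj_on ?f ({1, -1} \<times> reps ((int l)^2))"
  proof (rule inj_onI)
    fix p1 p2 assume p1: "p1 \<in> {1, -1} \<times> reps ((int l)^2)" and p2: "p2 \<in> {1, -1} \<times> reps ((int l)^2)"
      and eq: "?f p1 = ?f p2"
    obtain s x y where P1: "p1 = (s, x, y)" by (cases p1) auto
    obtain s' x' y' where P2: "p2 = (s', x', y')" by (cases p2) auto
    let ?a = "of_int x / of_nat l :: rat" and ?b = "of_int y / of_nat l :: rat"
    have E: "Mt ?a ?b s = Mt (of_int x' / of_nat l) (of_int y' / of_nat l) s'" using eq P1 P2 by simp
    have "?a = of_int x' / of_nat l" using arg_cong[OF E, of "\<lambda>M. M $ 1 $ 1"] by simp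
    then have xx: "x = x'" using l0 by simp
    have "?b = of_int y' / of_nat l" using arg_cong[OF E, of "\<lambda>M. M $ 2 $ 1"] by simp
    then have yy: "y = y'" using l0 by simp
    have "s * ?a = s' * ?a" using arg_cong[OF E, of "\<lambda>M. M $ 2 $ 2"] xx by simp
    moreover have "s * ?b = s' * ?b" using arg_cong[OF E, of "\<lambda>M. M $ 1 $ 2"] yy by simp
    moreover have "x \<noteq> 0 \<or> y \<noteq> 0" using p1 P1 assms unfolding reps_def by auto
    then have "?a \<noteq> 0 \<or> ?b \<noteq> 0" using l0 by auto
    ultimately have "s = s'" by auto
    then show "p1 = p2" using P1 P2 xx yy by simp
  qed
  then have "card (orth_level l :: (rat^2^2) set) = card ({1, -1::rat} \<times> reps ((int l)^2))"
    unfolding orth_level_eq[OF assms] by (rule card_image)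
  also have "\<dots> = 2 * card (reps ((int l)^2))" by (simp add: card_cartesian_product)
  finally show ?thesis .
qed

theorem proposition3p1:
  fixes l :: nat
  assumes "l \<ge> 2"
  shows "(orth_level l \<noteq> ({} :: (rat^2^2) set)
           \<longleftrightarrow> (\<forall>p \<in> prime_factors l. p mod 4 = 1))
       \<and> ((\<forall>p \<in> prime_factors l. p mod 4 = 1) \<longrightarrow>
           card (orth_level l :: (rat^2^2) set) = 2 ^ (card (prime_factors l) + 3))"
proof -
  have l1: "l \<ge> 1" using assms by simp
  have il: "int l \<ge> 2" using assms by simp
  have "2 * 2 \<le> int l * int l" using il by (intro mult_mono) auto
  then have n1: "(int l)^2 > 1" by (simp add: power2_eq_square)
  have good: "card (orth_level l :: (rat^2^2) set) = 2 ^ (card (prime_factors l) + 3)"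
    if P: "\<forall>p \<in> prime_factors l. p mod 4 = 1"
  proof -
    have "2 \<notin> prime_factors l" using P by auto
    then have "\<not> 2 dvd l" using l1 by (simp add: in_prime_factors_iff)
    then have odd: "odd (int l)" by simp
    have "card (orth_level l :: (rat^2^2) set) = 2 * card (reps ((int l)^2))" by (rule orth_level_card[OF l1])
    also have "\<dots> = 2 * (4 * card (rootsm1 ((int l)^2)))" using reps_card[OF il odd] by simp
    also have "\<dots> = 2 * (4 * 2 ^ card (prime_factors l))" using roots_count[OF l1 P] by simp
    also have "\<dots> = 2 ^ (card (prime_factors l) + 3)" by (simp add: power_add)
    finally show ?thesis .
  qed
  have bad: "(orth_level l :: (rat^2^2) set) = {}" if nP: "\<not> (\<forall>p \<in> prime_factors l. p mod 4 = 1)"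
  proof -
    obtain p where "p \<in> prime_factors l" "p mod 4 \<noteq> 1" using nP by blast
    then have "rootsm1 ((int l)^2) = {}" using roots_empty l1 by blast
    then have "reps ((int l)^2) = {}" using reps_empty n1 by blast
    then show ?thesis unfolding orth_level_eq[OF l1] by simp
  qed
  have fin: "finite (orth_level l :: (rat^2^2) set)"
    unfolding orth_level_eq[OF l1] using finite_reps by simp
  show ?thesis
  proof (intro conjI impI)
    show "(orth_level l \<noteq> ({} :: (rat^2^2) set)) \<longleftrightarrow> (\<forall>p \<in> prime_factors l. p mod 4 = 1)"
    proof
      assume "orth_level l \<noteq> ({} :: (rat^2^2) set)"
      then show "\<forall>p \<in> prime_factors l. p mod 4 = 1" using bad by blast
    next
      assume P: "\<forall>p \<in> prime_factors l. p mod 4 = 1"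
      then have "card (orth_level l :: (rat^2^2) set) \<noteq> 0" using good by simp
      then show "orth_level l \<noteq> ({} :: (rat^2^2) set)" by auto
    qed
  next
    assume "\<forall>p \<in> prime_factors l. p mod 4 = 1"
    then show "card (orth_level l :: (rat^2^2) set) = 2 ^ (card (prime_factors l) + 3)" by (rule good)
  qed
qed


end
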